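(* Let $x_0\in\mathbb{R}$. If $\liminf_{n\to\infty}\big(p_n(x_0)^2+p_{n+1}(x_0)^2\big)^{1/n}>1$, then $\displaystyle \frac{p_n(x_0)^2}{K_n(x_0,x_0)}$ does not tend to $0$ as $n\to\infty$.
   Context: Let $\rho$ be a probability measure on $\mathbb{R}$ with compact but infinite support, $p_n$ ($n\ge0$) its orthonormal polynomials (real coefficients, positive leading coefficient, $p_0=1$), and $K_n(x,y)=\sum_{j=0}^n p_j(x)p_j(y)$. *)

theory Defs
  imports "HOL-Probability.Probability" "HOL-Computational_Algebra.Polynomial"
begin

definition measure_support :: "real measure \<Rightarrow> real set" where
  "measure_support M = {x. \<forall>e>0. emeasure M (ball x e) > 0}"

definition orthonormal_polys :: "real measure \<Rightarrow> (nat \<Rightarrow> real poly) \<Rightarrow> bool" where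
  "orthonormal_polys M p \<longleftrightarrow>
     (\<forall>n. degree (p n) = n \<and> lead_coeff (p n) > 0) \<and>
     (\<forall>i j. (\<integral>x. poly (p i) x * poly (p j) x \<partial>M) = (if i = j then 1 else 0))"

definition christoffel_darboux_kernel :: "(nat \<Rightarrow> real poly) \<Rightarrow> nat \<Rightarrow> real \<Rightarrow> real \<Rightarrow> real" where
  "christoffel_darboux_kernel p n x y = (\<Sum>j\<le>n. poly (p j) x * poly (p j) y)"

end

theory Submission
  imports Defs
begin

lemma key:
  fixes a :: "nat \<Rightarrow> real" and c :: real
  assumes nn: "\<And>n. a n \<ge> 0"
    and lim: "(\<lambda>n. a n / (\<Sum>j\<le>n. a j)) \<longlonglongrightarrow> 0"
    and c1: "c > 1"
    and ev: "eventually (\<lambda>n. a n + a (Suc n) > c ^ n) sequentially"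
  shows False
proof -
  define K where "K n = (\<Sum>j\<le>n. a j)" for n
  define r where "r = (1 + c) / 2"
  have r1: "1 < r" and rc: "r < c" using c1 by (auto simp: r_def)
  define d where "d = 1 - 1 / r"
  have d0: "0 < d" and d1: "d < 1" using r1 by (auto simp: d_def field_simps)
  from ev obtain N0 where N0: "\<And>n. n \<ge> N0 \<Longrightarrow> a n + a (Suc n) > c ^ n"
    by (auto simp: eventually_sequentially)
  have "eventually (\<lambda>n. \<bar>a n / K n\<bar> < d) sequentially"
    using lim d0 unfolding K_def LIMSEQ_iff eventually_sequentially by (metis diff_zero real_norm_def)
  then obtain N1 where N1: "\<And>n. n \<ge> N1 \<Longrightarrow> \<bar>a n / K n\<bar> < d"
    by (auto simp: eventually_sequentially)
  have Kmono: "K m \<le> K n" if "m \<le> n" for m n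
    unfolding K_def using that nn by (intro sum_mono2) auto
  have aK: "a n \<le> K n" for n
    unfolding K_def using nn by (intro member_le_sum) auto
  have "c ^ N0 > 0" using c1 by simp
  hence "a N0 + a (Suc N0) > 0" using N0[of N0] by linarith
  hence "K (Suc N0) > 0" using aK[of N0] aK[of "Suc N0"] Kmono[of N0 "Suc N0"] by linarith
  define N where "N = max N1 (Suc N0)"
  have Kpos: "K n > 0" if "n \<ge> N" for n
    using Kmono[of "Suc N0" n] that \<open>K (Suc N0) > 0\<close> by (auto simp: N_def)
  have step: "K (Suc n) \<le> r * K n" if "n \<ge> N" for n
  proof -
    have p: "K (Suc n) > 0" using Kpos that by simp
    have "\<bar>a (Suc n) / K (Suc n)\<bar> < d" using N1 that by (auto simp: N_def)
    hence "a (Suc n) < d * K (Suc n)" using p nn[of "Suc n"] by (simp add: field_simps)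
    moreover have "K (Suc n) = K n + a (Suc n)" by (simp add: K_def)
    ultimately have "(1 - d) * K (Suc n) < K n" by (simp add: algebra_simps)
    hence "K (Suc n) / r < K n" by (simp add: d_def)
    thus ?thesis using r1 by (simp add: field_simps)
  qed
  have bound: "K (N + k) \<le> K N * r ^ k" for k
  proof (induction k)
    case 0 then show ?case by simp
  next
    case (Suc k)
    have "K (N + Suc k) \<le> r * K (N + k)" using step[of "N + k"] by simp
    also have "\<dots> \<le> r * (K N * r ^ k)" using Suc r1 by simp
    finally show ?case by (simp add: algebra_simps)
  qed
  define B where "B = K N * r / r ^ N"
  have cr: "1 < c / r" using rc r1 by simp
  obtain m where m: "B < (c / r) ^ m" using real_arch_pow[OF cr] by blast
  define n where "n = max m N"
  have "(c / r) ^ m \<le> (c / r) ^ n" using cr by (intro power_increasing) (auto simp: n_def)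
  with m have Bn: "B < (c / r) ^ n" by simp
  have nN0: "n \<ge> N0" "n \<ge> N" by (auto simp: n_def N_def)
  have "c ^ n < a n + a (Suc n)" using N0 nN0 by simp
  also have "\<dots> \<le> K (Suc n)"
  proof -
    have "K (Suc n) = K n + a (Suc n)" by (simp add: K_def)
    thus ?thesis using aK[of n] by simp
  qed
  also have "K (Suc n) = K (N + (Suc n - N))" using nN0 by simp
  also have "\<dots> \<le> K N * r ^ (Suc n - N)" by (rule bound)
  also have "r ^ (Suc n - N) = r ^ (Suc n) / r ^ N"
    using nN0 r1 by (simp add: power_diff)
  finally have "c ^ n < K N * (r ^ Suc n / r ^ N)" .
  hence "c ^ n < B * r ^ n" by (simp add: B_def field_simps)
  hence "c ^ n / r ^ n < B" using r1 by (simp add: field_simps)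
  hence "(c / r) ^ n < B" by (simp add: power_divide)
  with Bn show False by simp
qed

theorem theorem3p2:
  fixes M :: "real measure" and p :: "nat \<Rightarrow> real poly" and x0 :: real
  assumes "prob_space M"
    and "sets M = sets borel"
    and "compact (measure_support M)"
    and "infinite (measure_support M)"
    and "orthonormal_polys M p"
    and "liminf (\<lambda>n. ereal (((poly (p n) x0)\<^sup>2 + (poly (p (Suc n)) x0)\<^sup>2) powr (1 / real n))) > 1"
  shows "\<not> ((\<lambda>n. (poly (p n) x0)\<^sup>2 / christoffel_darboux_kernel p n x0 x0) \<longlonglongrightarrow> 0)"
proof
  assume L: "(\<lambda>n. (poly (p n) x0)\<^sup>2 / christoffel_darboux_kernel p n x0 x0) \<longlonglongrightarrow> 0"
  define a where "a n = (poly (p n) x0)\<^sup>2" for n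
  have lim: "(\<lambda>n. a n / (\<Sum>j\<le>n. a j)) \<longlonglongrightarrow> 0"
    using L by (simp add: a_def christoffel_darboux_kernel_def power2_eq_square)
  obtain c where c: "1 < ereal c" "ereal c < liminf (\<lambda>n. ereal ((a n + a (Suc n)) powr (1 / real n)))"
    using assms(6) ereal_dense2 unfolding a_def by blast
  have c1: "c > 1" using c(1) by simp
  have ev0: "eventually (\<lambda>n. ereal c < ereal ((a n + a (Suc n)) powr (1 / real n))) sequentially"
    using less_LiminfD[OF c(2)] .
  have ev: "eventually (\<lambda>n. a n + a (Suc n) > c ^ n) sequentially"
    using ev0 eventually_gt_at_top[of 0]
  proof eventually_elim
    case (elim n)
    define x where "x = a n + a (Suc n)"
    have cx: "c < x powr (1 / real n)" using elim by (simp add: x_def)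
    have "x \<noteq> 0" using cx c1 by auto
    moreover have "x \<ge> 0" by (simp add: x_def a_def)
    ultimately have xp: "x > 0" by simp
    have "c ^ n < (x powr (1 / real n)) ^ n"
      using cx c1 elim(2) by (intro power_strict_mono) auto
    also have "\<dots> = x powr (1 / real n * real n)"
      using xp by (simp add: powr_realpow[symmetric] powr_powr)
    also have "\<dots> = x" using elim(2) xp by simp
    finally show ?case by (simp add: x_def)
  qed
  show False by (rule key[OF _ lim c1 ev]) (simp add: a_def)
qed

end
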